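(* Let $b>0$ and let $\psi(x;a,\sigma)$ be as in the context, with $\psi^{(k)}$ its $k$-th derivative in $x$. For every $k\in\mathbb{N}\cup\{0\}$ and $x\in\mathbb{R}$, $$\frac{\partial}{\partial a}\Big(\frac{\psi^{(k)}(x;a,\sigma)}{\psi^{(k+1)}(x;a,\sigma)}\Big)=\frac{\psi^{(k)}(x;a,\sigma)\psi^{(k+2)}(x;a,\sigma)-\psi^{(k+1)}(x;a,\sigma)^2}{b\,\psi^{(k+1)}(x;a,\sigma)^2}>0.$$
   Context: Constants $b>0$, $\rho>0$; parameters $a\in\mathbb{R}$, $\sigma>0$. For $\beta<0$, $D_\beta(x)=\frac{e^{-x^2/4}}{\Gamma(-\beta)}\int_0^\infty t^{-\beta-1}e^{-t^2/2-xt}dt$, and $\psi(x;a,\sigma)=e^{\frac{(bx-a)^2}{2\sigma^2 b}}D_{-\rho/b}\big(-\frac{bx-a}{\sigma b}\sqrt{2b}\big)$, the positive strictly increasing fundamental solution of $\frac12\sigma^2u''+(a-bx)u'-\rho u=0$. *)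

theory Defs
  imports "HOL-Analysis.Analysis"
begin

text \<open>Parabolic cylinder function for \<open>\<beta> < 0\<close> via its integral representation
  (improper integral over \<open>(0,\<infinity>)\<close>, taken as a Henstock--Kurzweil integral).\<close>
definition pcyl_D :: "real \<Rightarrow> real \<Rightarrow> real" where
  "pcyl_D \<beta> x = exp (- x\<^sup>2 / 4) / Gamma (- \<beta>) *
     integral {0<..} (\<lambda>t. t powr (- \<beta> - 1) * exp (- t\<^sup>2 / 2 - x * t))"

text \<open>\<open>\<psi>(x;a,\<sigma>)\<close> with the constants \<open>b\<close>, \<open>\<rho>\<close> as explicit parameters.\<close>
definition psi :: "real \<Rightarrow> real \<Rightarrow> real \<Rightarrow> real \<Rightarrow> real \<Rightarrow> real" where
  "psi b \<rho> a \<sigma> x = exp ((b * x - a)\<^sup>2 / (2 * \<sigma>\<^sup>2 * b)) *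
     pcyl_D (- \<rho> / b) (- ((b * x - a) / (\<sigma> * b)) * sqrt (2 * b))"

definition psi_d :: "real \<Rightarrow> real \<Rightarrow> nat \<Rightarrow> real \<Rightarrow> real \<Rightarrow> real \<Rightarrow> real" where
  "psi_d b \<rho> k a \<sigma> x = (deriv ^^ k) (psi b \<rho> a \<sigma>) x"

end

theory Submission
  imports Defs
begin

definition ff :: "real \<Rightarrow> real \<Rightarrow> real \<Rightarrow> real" where
  "ff p y t = t powr p * exp (y * t - t\<^sup>2 / 2)"

definition JJ :: "real \<Rightarrow> real \<Rightarrow> real" where
  "JJ p y = integral {0<..} (ff p y)"

lemma gamma_int:
  fixes p :: real
  assumes "p > -1"
  shows "(\<lambda>t. t powr p / exp t) integrable_on {0<..}"
proof -
  have "(\<lambda>t. t powr (p + 1 - 1) / exp t) integrable_on {0..}"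
    using Gamma_integral_real[of "p+1"] assms by (auto simp: integrable_on_def)
  then have "(\<lambda>t. t powr p / exp t) integrable_on {0..}" by simp
  moreover have "negligible (({0..} - {0<..}) \<union> ({0<..} - {(0::real)..}))"
    by (rule negligible_subset[of "{0}"]) auto
  ultimately show ?thesis using integrable_spike_set_eq by blast
qed

lemma ff_bound:
  assumes "t > 0"
  shows "ff p y t \<le> exp ((y+1)\<^sup>2/2) * (t powr p / exp t)"
proof -
  have "y * t - t\<^sup>2 / 2 \<le> (y+1)\<^sup>2/2 - t"
    using sum_power2_ge_zero[of "t - (y+1)" 0] by (simp add: power2_eq_square algebra_simps)
  then have "exp (y * t - t\<^sup>2 / 2) \<le> exp ((y+1)\<^sup>2/2) / exp t"
    by (simp add: exp_diff[symmetric])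
  then have "t powr p * exp (y * t - t\<^sup>2 / 2) \<le> t powr p * (exp ((y+1)\<^sup>2/2) / exp t)"
    by (rule mult_left_mono) simp
  then show ?thesis unfolding ff_def by (simp add: ac_simps)
qed

lemma ff_cont: "continuous_on {0<..} (ff p y)"
  unfolding ff_def by (intro continuous_intros) auto

lemma ff_int:
  assumes "p > -1"
  shows "ff p y integrable_on {0<..}"
proof (rule measurable_bounded_by_integrable_imp_integrable_real)
  show "ff p y \<in> borel_measurable (lebesgue_on {0<..})"
    by (rule continuous_imp_measurable_on_sets_lebesgue[OF ff_cont]) auto
  show "(\<lambda>t. exp ((y+1)\<^sup>2/2) * (t powr p / exp t)) integrable_on {0<..}"
    using gamma_int[OF assms] by (rule integrable_on_mult_right)
  show "\<bar>ff p y t\<bar> \<le> exp ((y+1)\<^sup>2/2) * (t powr p / exp t)" if "t \<in> {0<..}" for t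
    using ff_bound[of t p y] that by (simp add: ff_def)
qed auto

lemma exp_taylor_bound:
  fixes u :: real
  shows "\<bar>exp u - 1 - u\<bar> \<le> u\<^sup>2 * exp \<bar>u\<bar>"
proof -
  have a: "1 + u \<le> exp u" by (rule exp_ge_add_one_self)
  have b: "1 - u \<le> exp (-u)" using exp_ge_add_one_self[of "-u"] by simp
  have e: "exp u * exp (-u) = 1" by (simp add: exp_minus)
  have g1: "exp u - 1 - u \<le> u * (exp u - 1)"
  proof -
    have "(1 - u) * exp u \<le> exp (-u) * exp u"
      using b by (rule mult_right_mono) simp
    then show ?thesis using e by (simp add: algebra_simps)
  qed
  have g2: "u * (exp u - 1) \<le> u\<^sup>2 * exp \<bar>u\<bar>"
  proof (cases "u \<ge> 0")
    case True
    have "exp u - 1 \<le> u * exp u"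
    proof -
      have "(1 - u) * exp u \<le> exp (-u) * exp u"
        using b by (rule mult_right_mono) simp
      then show ?thesis using e by (simp add: algebra_simps)
    qed
    then have "u * (exp u - 1) \<le> u * (u * exp u)" using True by (rule mult_left_mono)
    then show ?thesis using True by (simp add: power2_eq_square)
  next
    case False
    have "u * (exp u - 1) \<le> u * u"
      by (rule mult_left_mono_neg) (use a False in linarith)+
    then have "u * (exp u - 1) \<le> u\<^sup>2" by (simp add: power2_eq_square)
    also have "\<dots> \<le> u\<^sup>2 * exp \<bar>u\<bar>"
      using mult_left_mono[of 1 "exp \<bar>u\<bar>" "u\<^sup>2"] by simp
    finally show ?thesis .
  qed
  have "0 \<le> exp u - 1 - u" using a by linarith
  then show ?thesis using g1 g2 by (simp only: abs_of_nonneg)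
qed

lemma ff_diff_bound:
  fixes p y h t :: real
  assumes "t > 0" "\<bar>h\<bar> \<le> 1"
  shows "\<bar>ff p (y + h) t - ff p y t - h * ff (p + 1) y t\<bar> \<le> h\<^sup>2 * ff (p + 2) (y + 1) t"
proof -
  have eq: "ff p (y + h) t - ff p y t - h * ff (p + 1) y t = ff p y t * (exp (h * t) - 1 - h * t)"
    using assms(1) by (simp add: ff_def powr_add algebra_simps exp_add[symmetric])
  have "\<bar>exp (h * t) - 1 - h * t\<bar> \<le> (h * t)\<^sup>2 * exp \<bar>h * t\<bar>"
    by (rule exp_taylor_bound)
  also have "\<dots> \<le> (h * t)\<^sup>2 * exp t"
  proof -
    have "\<bar>h * t\<bar> \<le> t" using assms by (simp add: abs_mult mult_left_le_one_le)
    then show ?thesis by (intro mult_left_mono) auto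
  qed
  finally have *: "\<bar>exp (h * t) - 1 - h * t\<bar> \<le> (h * t)\<^sup>2 * exp t" .
  have pos: "ff p y t \<ge> 0" by (simp add: ff_def)
  have "\<bar>ff p (y + h) t - ff p y t - h * ff (p + 1) y t\<bar> = ff p y t * \<bar>exp (h * t) - 1 - h * t\<bar>"
    using pos by (simp add: eq abs_mult)
  also have "\<dots> \<le> ff p y t * ((h * t)\<^sup>2 * exp t)" using pos * by (rule mult_left_mono[rotated])
  also have "\<dots> = h\<^sup>2 * ff (p + 2) (y + 1) t"
    using assms(1) by (simp add: ff_def powr_add power2_eq_square algebra_simps exp_add[symmetric])
  finally show ?thesis .
qed

lemma JJ_diff_bound:
  fixes p y h :: real
  assumes "p > -1" "\<bar>h\<bar> \<le> 1"
  shows "\<bar>JJ p (y + h) - JJ p y - h * JJ (p + 1) y\<bar> \<le> h\<^sup>2 * JJ (p + 2) (y + 1)"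
proof -
  have i1: "ff p (y + h) integrable_on {0<..}" "ff p y integrable_on {0<..}"
    "ff (p + 1) y integrable_on {0<..}" "ff (p + 2) (y + 1) integrable_on {0<..}"
    using assms by (auto intro!: ff_int)
  have i2: "(\<lambda>t. h * ff (p + 1) y t) integrable_on {0<..}"
    using i1(3) by (rule integrable_on_mult_right)
  have i3: "(\<lambda>t. ff p (y + h) t - ff p y t) integrable_on {0<..}"
    using i1 by (intro integrable_diff)
  have i4: "(\<lambda>t. ff p (y + h) t - ff p y t - h * ff (p + 1) y t) integrable_on {0<..}"
    using i3 i2 by (rule integrable_diff)
  have i5: "(\<lambda>t. h\<^sup>2 * ff (p + 2) (y + 1) t) integrable_on {0<..}"
    using i1(4) by (rule integrable_on_mult_right)
  have "JJ p (y + h) - JJ p y - h * JJ (p + 1) y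
      = integral {0<..} (\<lambda>t. ff p (y + h) t - ff p y t - h * ff (p + 1) y t)"
    unfolding JJ_def using i1 i2 i3 by (simp add: integral_diff)
  also have "norm \<dots> \<le> integral {0<..} (\<lambda>t. h\<^sup>2 * ff (p + 2) (y + 1) t)"
    using i4 i5 by (rule integral_norm_bound_integral) (use ff_diff_bound assms in auto)
  also have "\<dots> = h\<^sup>2 * JJ (p + 2) (y + 1)" unfolding JJ_def by simp
  finally show ?thesis by simp
qed

lemma JJ_deriv:
  fixes p y :: real
  assumes "p > -1"
  shows "(JJ p has_real_derivative JJ (p + 1) y) (at y)"
proof -
  define M where "M = \<bar>JJ (p + 2) (y + 1)\<bar> + 1"
  have M: "M > 0" unfolding M_def by simp
  have "((\<lambda>h. (JJ p (y + h) - JJ p y) / h) \<longlongrightarrow> JJ (p + 1) y) (at 0)"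
  proof (rule LIM_I)
    fix r :: real assume r: "r > 0"
    show "\<exists>s>0. \<forall>h. h \<noteq> 0 \<and> norm (h - 0) < s \<longrightarrow> norm ((JJ p (y + h) - JJ p y) / h - JJ (p + 1) y) < r"
    proof (intro exI[of _ "min 1 (r / M)"] conjI allI impI)
      show "min 1 (r / M) > 0" using r M by simp
      fix h :: real assume h: "h \<noteq> 0 \<and> norm (h - 0) < min 1 (r / M)"
      then have h1: "\<bar>h\<bar> \<le> 1" and h2: "\<bar>h\<bar> * M < r"
        using M by (auto simp: field_simps)
      have "(JJ p (y + h) - JJ p y) / h - JJ (p + 1) y = (JJ p (y + h) - JJ p y - h * JJ (p + 1) y) / h"
        using h by (simp add: field_simps)
      then have "norm ((JJ p (y + h) - JJ p y) / h - JJ (p + 1) y)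
          = \<bar>JJ p (y + h) - JJ p y - h * JJ (p + 1) y\<bar> / \<bar>h\<bar>" by simp
      also have "\<dots> \<le> h\<^sup>2 * JJ (p + 2) (y + 1) / \<bar>h\<bar>"
        using JJ_diff_bound[OF assms h1, of y] by (simp add: divide_right_mono)
      also have "\<dots> = \<bar>h\<bar> * JJ (p + 2) (y + 1)" using h by (simp add: power2_eq_square field_simps)
      also have "\<dots> \<le> \<bar>h\<bar> * M" unfolding M_def by (intro mult_left_mono) auto
      also have "\<dots> < r" by (rule h2)
      finally show "norm ((JJ p (y + h) - JJ p y) / h - JJ (p + 1) y) < r" .
    qed
  qed
  then show ?thesis by (simp add: DERIV_def)
qed

lemma pos_int:
  fixes g :: "real \<Rightarrow> real"
  assumes cont: "continuous_on {0<..} g" and nn: "\<And>t. t > 0 \<Longrightarrow> g t \<ge> 0"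
    and int: "g integrable_on {0<..}" and tz: "tz > 0" "g tz > 0"
  shows "integral {0<..} g > 0"
proof -
  have sub: "{tz/2..tz} \<subseteq> {0<..}" using tz by auto
  have c2: "continuous_on {tz/2..tz} g" using cont sub by (rule continuous_on_subset)
  have i2: "g integrable_on {tz/2..tz}" using c2 by (rule integrable_continuous_real)
  have le: "integral {tz/2..tz} g \<le> integral {0<..} g"
    using sub i2 int by (rule integral_subset_le) (use nn in auto)
  have ge: "integral {tz/2..tz} g \<ge> 0" using i2 by (rule integral_nonneg) (use nn tz in auto)
  have "integral {tz/2..tz} g \<noteq> 0"
  proof
    assume "integral {tz/2..tz} g = 0"
    then have "(g has_integral 0) (cbox (tz/2) tz)" using i2 by (metis cbox_interval has_integral_integral)
    then have "g tz = 0"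
      by (rule has_integral_0_cbox_imp_0[rotated 2]) (use c2 nn tz in auto)
    then show False using tz by simp
  qed
  then show ?thesis using le ge by linarith
qed

lemma JJ_pos:
  assumes "p > -1"
  shows "JJ p y > 0"
  unfolding JJ_def by (rule pos_int[where tz=1, OF ff_cont]) (auto simp: ff_def intro: ff_int assms)

lemma JJ_CS:
  assumes "p > -1"
  shows "JJ p y * JJ (p + 2) y > (JJ (p + 1) y)\<^sup>2"
proof -
  define l where "l = JJ (p + 1) y / JJ p y"
  have P: "JJ p y > 0" using JJ_pos[OF assms] .
  have i0: "ff p y integrable_on {0<..}" "ff (p + 1) y integrable_on {0<..}" "ff (p + 2) y integrable_on {0<..}"
    using assms by (auto intro!: ff_int)
  have ia: "(\<lambda>t. ff (p + 2) y t - 2 * l * ff (p + 1) y t) integrable_on {0<..}"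
    using i0 by (intro integrable_diff integrable_on_mult_right)
  have ib: "(\<lambda>t. l\<^sup>2 * ff p y t) integrable_on {0<..}"
    using i0 by (intro integrable_on_mult_right)
  have eq: "\<And>t. t \<in> {0<..} \<Longrightarrow> (t - l)\<^sup>2 * ff p y t = ff (p + 2) y t - 2 * l * ff (p + 1) y t + l\<^sup>2 * ff p y t"
    by (simp add: ff_def powr_add power2_eq_square algebra_simps)
  have int: "(\<lambda>t. (t - l)\<^sup>2 * ff p y t) integrable_on {0<..}"
    using integrable_add[OF ia ib] by (rule integrable_spike_finite[of "{}", rotated 2]) (auto simp: eq)
  have "integral {0<..} (\<lambda>t. (t - l)\<^sup>2 * ff p y t) > 0"
  proof (rule pos_int[of _ "\<bar>l\<bar> + 1"])
    show "continuous_on {0<..} (\<lambda>t. (t - l)\<^sup>2 * ff p y t)"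
      using ff_cont by (intro continuous_intros) auto
    show "(\<bar>l\<bar> + 1 - l)\<^sup>2 * ff p y (\<bar>l\<bar> + 1) > 0"
      by (intro mult_pos_pos) (auto simp: ff_def)
  qed (use int in \<open>auto simp: ff_def\<close>)
  also have "integral {0<..} (\<lambda>t. (t - l)\<^sup>2 * ff p y t)
      = integral {0<..} (\<lambda>t. ff (p + 2) y t - 2 * l * ff (p + 1) y t + l\<^sup>2 * ff p y t)"
    by (rule integral_cong) (rule eq)
  also have "\<dots> = JJ (p + 2) y - 2 * l * JJ (p + 1) y + l\<^sup>2 * JJ p y"
  proof -
    have i2: "(\<lambda>t. 2 * l * ff (p + 1) y t) integrable_on {0<..}"
      using i0 by (intro integrable_on_mult_right)
    have "integral {0<..} (\<lambda>t. ff (p + 2) y t - 2 * l * ff (p + 1) y t + l\<^sup>2 * ff p y t)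
      = integral {0<..} (\<lambda>t. ff (p + 2) y t - 2 * l * ff (p + 1) y t) + integral {0<..} (\<lambda>t. l\<^sup>2 * ff p y t)"
      using ia ib by (rule integral_add)
    also have "integral {0<..} (\<lambda>t. ff (p + 2) y t - 2 * l * ff (p + 1) y t)
      = integral {0<..} (ff (p + 2) y) - integral {0<..} (\<lambda>t. 2 * l * ff (p + 1) y t)"
      using i0(3) i2 by (rule integral_diff)
    finally show ?thesis unfolding JJ_def by simp
  qed
  finally have "0 < JJ (p + 2) y - 2 * l * JJ (p + 1) y + l\<^sup>2 * JJ p y" .
  then have "0 < JJ p y * (JJ (p + 2) y - 2 * l * JJ (p + 1) y + l\<^sup>2 * JJ p y)"
    using P by simp
  also have "\<dots> = JJ p y * JJ (p + 2) y - (JJ (p + 1) y)\<^sup>2"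
    using P unfolding l_def by (simp add: power2_eq_square field_simps)
  finally show ?thesis by simp
qed

lemma psi_eq:
  assumes "b > 0" "\<rho> > 0" "\<sigma> > 0"
  shows "psi b \<rho> a \<sigma> x = 1 / Gamma (\<rho> / b) * JJ (\<rho> / b - 1) ((b * x - a) / (\<sigma> * b) * sqrt (2 * b))"
proof -
  define u where "u = (b * x - a) / (\<sigma> * b) * sqrt (2 * b)"
  have fe: "(\<lambda>t. t powr (- (- \<rho> / b) - 1) * exp (- t\<^sup>2 / 2 - - ((b * x - a) / (\<sigma> * b)) * sqrt (2 * b) * t))
      = ff (\<rho> / b - 1) u"
    by (rule ext) (simp add: ff_def u_def algebra_simps)
  have "((b * x - a) / (\<sigma> * b) * sqrt (2 * b))\<^sup>2 = (b * x - a)\<^sup>2 / (\<sigma>\<^sup>2 * b\<^sup>2) * (2 * b)"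
    using assms by (simp add: power_mult_distrib power_divide)
  then have ex: "(b * x - a)\<^sup>2 / (2 * \<sigma>\<^sup>2 * b) = ((b * x - a) / (\<sigma> * b) * sqrt (2 * b))\<^sup>2 / 4"
    using assms by (simp add: field_simps power2_eq_square)
  have "exp ((b * x - a)\<^sup>2 / (2 * \<sigma>\<^sup>2 * b)) * exp (- (- ((b * x - a) / (\<sigma> * b)) * sqrt (2 * b))\<^sup>2 / 4) = 1"
    by (simp add: ex exp_add[symmetric])
  then show ?thesis
    unfolding psi_def pcyl_D_def fe JJ_def u_def[symmetric]
    by (simp add: field_simps)
qed

lemma psi_d_eq:
  assumes "b > 0" "\<rho> > 0" "\<sigma> > 0"
  shows "psi_d b \<rho> k a \<sigma> = (\<lambda>x. (sqrt (2 * b) / \<sigma>) ^ k / Gamma (\<rho> / b) *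
            JJ (\<rho> / b - 1 + real k) ((b * x - a) / (\<sigma> * b) * sqrt (2 * b)))"
proof (induction k)
  case 0
  show ?case unfolding psi_d_def using psi_eq[OF assms] by auto
next
  case (Suc k)
  define C where "C = (sqrt (2 * b) / \<sigma>) ^ k / Gamma (\<rho> / b)"
  define q where "q = \<rho> / b - 1 + real k"
  have "\<rho> / b > 0" using assms by simp
  then have q: "q > -1" unfolding q_def by simp
  have "psi_d b \<rho> (Suc k) a \<sigma> = deriv (psi_d b \<rho> k a \<sigma>)"
    unfolding psi_d_def by simp
  also have "\<dots> = (\<lambda>x. C * (JJ (q + 1) ((b * x - a) / (\<sigma> * b) * sqrt (2 * b)) * (sqrt (2 * b) / \<sigma>)))"
  proof (rule ext)
    fix x :: real
    have du: "((\<lambda>x. (b * x - a) / (\<sigma> * b) * sqrt (2 * b)) has_real_derivative sqrt (2 * b) / \<sigma>) (at x)"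
      using assms by (auto intro!: derivative_eq_intros simp: field_simps)
    have "((\<lambda>x. C * JJ q ((b * x - a) / (\<sigma> * b) * sqrt (2 * b))) has_real_derivative
        C * (JJ (q + 1) ((b * x - a) / (\<sigma> * b) * sqrt (2 * b)) * (sqrt (2 * b) / \<sigma>))) (at x)"
      by (intro DERIV_cmult DERIV_chain2[OF JJ_deriv[OF q] du])
    then show "deriv (psi_d b \<rho> k a \<sigma>) x = C * (JJ (q + 1) ((b * x - a) / (\<sigma> * b) * sqrt (2 * b)) * (sqrt (2 * b) / \<sigma>))"
      unfolding Suc.IH C_def[symmetric] q_def[symmetric] by (rule DERIV_imp_deriv)
  qed
  also have "\<dots> = (\<lambda>x. (sqrt (2 * b) / \<sigma>) ^ Suc k / Gamma (\<rho> / b) *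
            JJ (\<rho> / b - 1 + real (Suc k)) ((b * x - a) / (\<sigma> * b) * sqrt (2 * b)))"
    unfolding C_def q_def by (rule ext) (simp add: algebra_simps)
  finally show ?case .
qed

theorem lemma5p3:
  fixes b \<rho> a \<sigma> x :: real and k :: nat
  assumes "b > 0" and "\<rho> > 0" and "\<sigma> > 0"
  shows "((\<lambda>a'. psi_d b \<rho> k a' \<sigma> x / psi_d b \<rho> (Suc k) a' \<sigma> x) has_real_derivative
           (psi_d b \<rho> k a \<sigma> x * psi_d b \<rho> (k + 2) a \<sigma> x - (psi_d b \<rho> (Suc k) a \<sigma> x)\<^sup>2)
           / (b * (psi_d b \<rho> (Suc k) a \<sigma> x)\<^sup>2)) (at a)
       \<and> (psi_d b \<rho> k a \<sigma> x * psi_d b \<rho> (k + 2) a \<sigma> x - (psi_d b \<rho> (Suc k) a \<sigma> x)\<^sup>2)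
           / (b * (psi_d b \<rho> (Suc k) a \<sigma> x)\<^sup>2) > 0"
proof -
  define m where "m = sqrt (2 * b) / \<sigma>"
  define C where "C = m ^ k / Gamma (\<rho> / b)"
  define q where "q = \<rho> / b - 1 + real k"
  define u where "u = (\<lambda>a'. (b * x - a') / (\<sigma> * b) * sqrt (2 * b))"
  have m: "m > 0" unfolding m_def using assms by simp
  have G: "Gamma (\<rho> / b) > 0" using assms by (intro Gamma_real_pos) simp
  have Cp: "C > 0" unfolding C_def using m G by simp
  have "\<rho> / b > 0" using assms by simp
  then have q: "q > -1" unfolding q_def by simp
  have q1: "q + 1 > -1" using q by simp
  have e0: "\<And>a'. psi_d b \<rho> k a' \<sigma> x = C * JJ q (u a')"
    unfolding psi_d_eq[OF assms] C_def m_def q_def u_def by simp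
  have e1: "\<And>a'. psi_d b \<rho> (Suc k) a' \<sigma> x = C * m * JJ (q + 1) (u a')"
    unfolding psi_d_eq[OF assms] C_def m_def q_def u_def by (simp add: algebra_simps)
  have e2: "\<And>a'. psi_d b \<rho> (k + 2) a' \<sigma> x = C * m\<^sup>2 * JJ (q + 2) (u a')"
    unfolding psi_d_eq[OF assms] C_def m_def q_def u_def by (simp add: algebra_simps power2_eq_square)
  define A where "A = JJ q (u a)"
  define B where "B = JJ (q + 1) (u a)"
  define D where "D = JJ (q + 2) (u a)"
  have Bp: "B > 0" unfolding B_def using q1 by (rule JJ_pos)
  have Ap: "A > 0" unfolding A_def using q by (rule JJ_pos)
  have CS: "A * D > B\<^sup>2" unfolding A_def B_def D_def using JJ_CS[OF q] by (simp add: add.assoc)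
  have du: "(u has_real_derivative - (m / b)) (at a)"
    unfolding u_def m_def using assms by (auto intro!: derivative_eq_intros simp: field_simps)
  have dA: "((\<lambda>a'. C * JJ q (u a')) has_real_derivative C * (B * - (m / b))) (at a)"
    unfolding B_def by (intro DERIV_cmult DERIV_chain2[OF JJ_deriv[OF q] du])
  have dB: "((\<lambda>a'. C * m * JJ (q + 1) (u a')) has_real_derivative C * m * (D * - (m / b))) (at a)"
    unfolding D_def using DERIV_cmult[OF DERIV_chain2[OF JJ_deriv[OF q1] du], of "C * m"]
    by (simp add: add.assoc)
  have d: "((\<lambda>a'. C * JJ q (u a') / (C * m * JJ (q + 1) (u a'))) has_real_derivative
      (C * (B * - (m / b)) * (C * m * B) - C * A * (C * m * (D * - (m / b)))) / (C * m * B * (C * m * B))) (at a)"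
    using DERIV_divide[OF dA dB] Cp m Bp unfolding A_def B_def by simp
  have eqv: "(C * (B * - (m / b)) * (C * m * B) - C * A * (C * m * (D * - (m / b)))) / (C * m * B * (C * m * B))
      = (C * A * (C * m\<^sup>2 * D) - (C * m * B)\<^sup>2) / (b * (C * m * B)\<^sup>2)"
    using Cp m Bp assms(1) by (simp add: field_simps power2_eq_square)
  have pos: "(C * A * (C * m\<^sup>2 * D) - (C * m * B)\<^sup>2) / (b * (C * m * B)\<^sup>2) > 0"
  proof -
    have "C * A * (C * m\<^sup>2 * D) - (C * m * B)\<^sup>2 = (C * m)\<^sup>2 * (A * D - B\<^sup>2)"
      by (simp add: power2_eq_square algebra_simps)
    moreover have "(C * m)\<^sup>2 * (A * D - B\<^sup>2) > 0" using Cp m CS by simp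
    ultimately show ?thesis using Cp m Bp assms(1) by simp
  qed
  show ?thesis
    unfolding e0 e1 e2 A_def[symmetric] B_def[symmetric] D_def[symmetric]
    using d eqv pos by simp
qed

end
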